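(* Assume Case (III) holds with $\mathrm{rank}(\mathbf H)=m$, and let $\mathbf y^\star$ be the unique least squares solution of $\mathbf z=\mathbf H\mathbf y$. Suppose $\mathrm G_{\sigma(t)}\equiv\mathrm G^S$ is the fixed complete digraph on $\mathrm V$ (all ordered pairs of distinct nodes are arcs) and $a_{ij}(t)\equiv a^S>0$ for all $i,j$. Then for every initial value $\mathbf x(0)\in\mathcal A_1\times\cdots\times\mathcal A_N$, along the "projection consensus" flow, $\lim_{t\to\infty}\frac1N\sum_{i=1}^N\mathbf x_i(t)=\mathbf y^\star$.
   Context: Setting: $N,m\ge1$; $\mathbf H\in\mathbb R^{N\times m}$ has rows $\mathbf h_1^T,\dots,\mathbf h_N^T$ with $\|\mathbf h_i\|=1$; $\mathbf z=(z_1,\dots,z_N)^T$. $\mathcal A_i=\{\mathbf y\in\mathbb R^m:\mathbf h_i^T\mathbf y=z_i\}$, $\mathcal P_{\mathcal A_i}(\mathbf y)=(I-\mathbf h_i\mathbf h_i^T)\mathbf y+z_i\mathbf h_i$ its Euclidean projection. Case (III): $\mathbf z$ is not in the column space of $\mathbf H$; least squares solution $\mathbf y^\star=(\mathbf H^T\mathbf H)^{-1}\mathbf H^T\mathbf z$. $\mathrm V=\{1,\dots,N\}$, $\mathrm N_i=\mathrm V\setminus\{i\}$ for the complete graph. The "projection consensus" flow is $\dot{\mathbf x}_i=\sum_{j\in\mathrm N_i}a_{ij}\big(\mathcal P_{\mathcal A_i}(\mathbf x_j)-\mathcal P_{\mathcal A_i}(\mathbf x_i)\big)$, $i\in\mathrm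 V$, $\mathbf x_i(t)\in\mathbb R^m$. *)

theory Defs
  imports "HOL-Analysis.Analysis"
begin

text \<open>Euclidean projection onto the affine hyperplane
  A_i = {y. h_i . y = z_i}: P_{A_i}(y) = (I - h_i h_i^T) y + z_i h_i.\<close>
definition projA :: "('n \<Rightarrow> real^'m) \<Rightarrow> ('n \<Rightarrow> real) \<Rightarrow> 'n \<Rightarrow> real^'m \<Rightarrow> real^'m" where
  "projA h z i y = (mat 1 - (\<chi> r c. (h i $ r) * (h i $ c))) *v y + z i *\<^sub>R h i"

definition rowmat :: "('n \<Rightarrow> real^'m) \<Rightarrow> real^'m^'n" where
  "rowmat h = (\<chi> i. h i)"

end

theory Submission imports Defs "HOL-Real_Asymp.Real_Asymp" begin
lemma projA_eq: "projA h z i y = y - (h i \<bullet> y) *\<^sub>R h i + z i *\<^sub>R h i"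
proof -
  have "((mat 1 - (\<chi> r c. (h i $ r) * (h i $ c))) *v y) $ r = y $ r - (h i \<bullet> y) * h i $ r" for r
  proof -
    have "((mat 1 - (\<chi> r c. (h i $ r) * (h i $ c))) *v y) $ r
       = (\<Sum>c\<in>UNIV. (if r = c then 1 else 0) * y $ c - h i $ r * (h i $ c * y $ c))"
      by (simp add: matrix_vector_mult_def mat_def left_diff_distrib mult.assoc)
    also have "\<dots> = y $ r - h i $ r * (h i \<bullet> y)"
      by (simp add: sum_subtractf inner_vec_def sum_distrib_left if_distrib[where f="\<lambda>a. a * _"] cong: if_cong)
    finally show ?thesis by simp
  qed
  then show ?thesis by (simp add: projA_def vec_eq_iff)
qed
lemma rowmat_mult: "rowmat h *v y = (\<chi> i. h i \<bullet> y)"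
  by (simp add: rowmat_def vec_eq_iff matrix_vector_mul_component)
lemma rowmat_tmult: "transpose (rowmat h) *v w = (\<Sum>i\<in>UNIV. w$i *\<^sub>R h i)"
  by (simp add: rowmat_def vec_eq_iff vector_matrix_mult_def sum_component mult.commute)

theorem theorem8:
  fixes h :: "'n::finite \<Rightarrow> real^'m" and z :: "real^'n"
    and aS :: real and x :: "real \<Rightarrow> 'n \<Rightarrow> real^'m"
  assumes unit: "\<And>i. norm (h i) = 1"
    and caseIII: "z \<notin> range (\<lambda>y. rowmat h *v y)"
    and rank: "rank (rowmat h) = CARD('m)"
    and aS_pos: "aS > 0"
    and flow: "\<And>i t. t \<ge> 0 \<Longrightarrow>
        ((\<lambda>s. x s i) has_vector_derivative
          (\<Sum>j\<in>UNIV - {i}. aS *\<^sub>R (projA h (\<lambda>k. z $ k) i (x t j) - projA h (\<lambda>k. z $ k) i (x t i))))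
        (at t within {0..})"
    and init: "\<And>i. h i \<bullet> x 0 i = z $ i"
  shows "((\<lambda>t. (1 / real CARD('n)) *\<^sub>R (\<Sum>i\<in>UNIV. x t i)) \<longlongrightarrow>
           matrix_inv (transpose (rowmat h) ** rowmat h) *v (transpose (rowmat h) *v z)) at_top"
proof -
  define H where "H = rowmat h"
  define M where "M = transpose H ** H"
  define b where "b = transpose H *v z"
  define ys where "ys = matrix_inv M *v b"
  define N where "N = real CARD('n)"
  define S where "S = (\<lambda>t. \<Sum>i\<in>UNIV. x t i)"
  define e where "e = (\<lambda>t. S t - N *\<^sub>R ys)"
  let ?P = "projA h (\<lambda>k. z $ k)"
  have hh: "h i \<bullet> h i = 1" for i using unit[of i] by (simp add: norm_eq_1)
  have hP: "h i \<bullet> ?P i y = z $ i" for i y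
    by (simp add: projA_eq inner_diff_right inner_add_right hh)
  have Npos: "N > 0" by (simp add: N_def)
  have inv: "h i \<bullet> x t i = z $ i" if "t \<ge> 0" for i t
  proof -
    have "\<exists>c. \<forall>s\<in>{0..}. h i \<bullet> x s i = c"
    proof (rule has_derivative_zero_constant)
      fix s :: real assume "s \<in> {0..}"
      then have d: "((\<lambda>s. x s i) has_vector_derivative
          (\<Sum>j\<in>UNIV - {i}. aS *\<^sub>R (?P i (x s j) - ?P i (x s i)))) (at s within {0..})"
        using flow by auto
      have "((\<lambda>s. h i \<bullet> x s i) has_derivative (\<lambda>u. h i \<bullet> (u *\<^sub>R (\<Sum>j\<in>UNIV - {i}. aS *\<^sub>R (?P i (x s j) - ?P i (x s i))))))
             (at s within {0..})"
        using d unfolding has_vector_derivative_def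
        by (intro has_derivative_inner_right) 
      moreover have "h i \<bullet> (\<Sum>j\<in>UNIV - {i}. aS *\<^sub>R (?P i (x s j) - ?P i (x s i))) = 0"
        by (simp add: inner_sum_right inner_diff_right hP)
      ultimately show "((\<lambda>s. h i \<bullet> x s i) has_derivative (\<lambda>u. 0)) (at s within {0..})"
        by simp
    qed simp
    then obtain c where "\<forall>s\<in>{0..}. h i \<bullet> x s i = c" by blast
    then show ?thesis using that init[of i] by force
  qed
  have Hmul: "H *v y = (\<chi> i. h i \<bullet> y)" for y by (simp add: H_def rowmat_mult)
  have Ht: "transpose H *v w = (\<Sum>i\<in>UNIV. w$i *\<^sub>R h i)" for w unfolding H_def by (rule rowmat_tmult)
  have Mmul: "M *v y = (\<Sum>i\<in>UNIV. (h i \<bullet> y) *\<^sub>R h i)" for y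
    unfolding M_def matrix_vector_mul_assoc[symmetric] Ht Hmul by simp
  have quad: "y \<bullet> (M *v y) = (H *v y) \<bullet> (H *v y)" for y
    by (metis M_def dot_lmul_matrix inner_commute matrix_vector_mul_assoc transpose_matrix_vector)
  have injH: "inj ((*v) H)" using rank full_rank_injective unfolding H_def by blast
  have injM: "inj ((*v) M)"
  proof (rule injI)
    fix u v assume "M *v u = M *v v"
    then have "M *v (u - v) = 0" by (simp add: matrix_vector_mult_diff_distrib)
    then have "(H *v (u - v)) \<bullet> (H *v (u - v)) = 0" using quad[of "u - v"] by simp
    then have "H *v (u - v) = 0" by simp
    then have "H *v u = H *v v" by (simp add: matrix_vector_mult_diff_distrib)
    then show "u = v" using injH by (simp add: inj_eq)
  qed
  have "invertible M"
    using injM matrix_left_invertible_injective invertible_left_inverse by blast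
  then have "M ** matrix_inv M = mat 1"
    unfolding invertible_def matrix_inv_def by (rule someI_ex[where P="\<lambda>A'. M ** A' = mat 1 \<and> A' ** M = mat 1", THEN conjunct1])
  then have Mys: "M *v ys = b"
    by (simp add: ys_def matrix_vector_mul_assoc)
  obtain B where Bpos: "B > 0" and Bbd: "\<And>y. B * norm y \<le> norm (H *v y)"
    using linear_inj_bounded_below_pos[OF matrix_vector_mul_linear injH] by blast
  have dS: "(S has_vector_derivative aS *\<^sub>R (N *\<^sub>R b - M *v S t)) (at t within {0..})" if t: "t \<ge> 0" for t
  proof -
    have "(S has_vector_derivative (\<Sum>i\<in>UNIV. \<Sum>j\<in>UNIV - {i}. aS *\<^sub>R (?P i (x t j) - ?P i (x t i)))) (at t within {0..})"
      unfolding S_def by (intro has_vector_derivative_sum flow t)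
    moreover have "(\<Sum>i\<in>UNIV. \<Sum>j\<in>UNIV - {i}. aS *\<^sub>R (?P i (x t j) - ?P i (x t i))) = aS *\<^sub>R (N *\<^sub>R b - M *v S t)"
    proof -
      have "(\<Sum>j\<in>UNIV - {i}. aS *\<^sub>R (?P i (x t j) - ?P i (x t i)))
          = aS *\<^sub>R (S t - N *\<^sub>R x t i - (h i \<bullet> S t) *\<^sub>R h i + N *\<^sub>R (z $ i *\<^sub>R h i))" for i
      proof -
        have "(\<Sum>j\<in>UNIV - {i}. aS *\<^sub>R (?P i (x t j) - ?P i (x t i)))
            = (\<Sum>j\<in>UNIV. aS *\<^sub>R (?P i (x t j) - ?P i (x t i)))"
          by (simp add: sum_diff1)
        also have "\<dots> = (\<Sum>j\<in>UNIV. aS *\<^sub>R (x t j - x t i - (h i \<bullet> x t j) *\<^sub>R h i + z $ i *\<^sub>R h i))"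
          by (intro sum.cong refl) (simp add: projA_eq inv[OF t] algebra_simps)
        also have "\<dots> = aS *\<^sub>R (S t - N *\<^sub>R x t i - (h i \<bullet> S t) *\<^sub>R h i + N *\<^sub>R (z $ i *\<^sub>R h i))"
          by (simp add: S_def N_def scaleR_sum_right[symmetric] sum.distrib sum_subtractf
              inner_sum_right scaleR_sum_left[symmetric] sum_constant_scaleR del: sum_constant)
        finally show ?thesis .
      qed
      then have "(\<Sum>i\<in>UNIV. \<Sum>j\<in>UNIV - {i}. aS *\<^sub>R (?P i (x t j) - ?P i (x t i)))
          = (\<Sum>i\<in>UNIV. aS *\<^sub>R (S t - N *\<^sub>R x t i - (h i \<bullet> S t) *\<^sub>R h i + N *\<^sub>R (z $ i *\<^sub>R h i)))"
        by simp
      also have "\<dots> = aS *\<^sub>R (N *\<^sub>R S t - N *\<^sub>R S t - M *v S t + N *\<^sub>R b)"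
        by (simp add: S_def N_def b_def Mmul Ht scaleR_sum_right[symmetric] sum.distrib sum_subtractf
              sum_constant_scaleR del: sum_constant transpose_matrix_vector)
           (simp add: scaleR_sum_right)
      finally show ?thesis by (simp add: algebra_simps)
    qed
    ultimately show ?thesis by simp
  qed
  have de: "(e has_vector_derivative - aS *\<^sub>R (M *v e t)) (at t within {0..})" if t: "t \<ge> 0" for t
  proof -
    have "(e has_vector_derivative aS *\<^sub>R (N *\<^sub>R b - M *v S t) - 0) (at t within {0..})"
      unfolding e_def by (intro derivative_intros dS t)
    moreover have "aS *\<^sub>R (N *\<^sub>R b - M *v S t) - 0 = - aS *\<^sub>R (M *v e t)"
      by (simp add: e_def matrix_vector_mult_diff_distrib matrix_vector_mult_scaleR Mys algebra_simps)
    ultimately show ?thesis by simp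
  qed
  define V where "V = (\<lambda>t. e t \<bullet> e t)"
  define k where "k = 2 * aS * B^2"
  have kpos: "k > 0" using aS_pos Bpos by (simp add: k_def)
  define W where "W = (\<lambda>t. V t * exp (k * t))"
  have dW: "(W has_real_derivative (2 * (e t \<bullet> (- aS *\<^sub>R (M *v e t)))) * exp (k * t) + V t * (exp (k * t) * k))
            (at t within {0..})" if t: "t \<ge> 0" for t
  proof -
    let ?D = "- aS *\<^sub>R (M *v e t)"
    have de': "(e has_derivative (\<lambda>u. u *\<^sub>R ?D)) (at t within {0..})"
      using de[OF t] by (simp add: has_vector_derivative_def)
    have "(V has_derivative (\<lambda>u. e t \<bullet> (u *\<^sub>R ?D) + (u *\<^sub>R ?D) \<bullet> e t)) (at t within {0..})"
      unfolding V_def by (rule has_derivative_inner[OF de' de'])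
    moreover have "(\<lambda>u. e t \<bullet> (u *\<^sub>R ?D) + (u *\<^sub>R ?D) \<bullet> e t) = (*) (2 * (e t \<bullet> ?D))"
      by (rule ext) (simp add: inner_commute algebra_simps)
    ultimately have "(V has_real_derivative 2 * (e t \<bullet> (- aS *\<^sub>R (M *v e t)))) (at t within {0..})"
      unfolding has_field_derivative_def by (simp only:)
    then show ?thesis unfolding W_def
      by (auto intro!: derivative_eq_intros)
  qed
  have dWneg: "2 * (e t \<bullet> (- aS *\<^sub>R (M *v e t))) * exp (k * t) + V t * (exp (k * t) * k) \<le> 0" for t
  proof -
    have "B * norm (e t) \<le> norm (H *v e t)" by (rule Bbd)
    then have "(B * norm (e t))^2 \<le> (norm (H *v e t))^2"
      using Bpos by (intro power_mono) auto
    then have "B^2 * V t \<le> e t \<bullet> (M *v e t)"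
      by (simp add: V_def quad power_mult_distrib dot_square_norm)
    then have a1: "aS * (B^2 * V t) \<le> aS * (e t \<bullet> (M *v e t))"
      using aS_pos by (intro mult_left_mono) auto
    have a2: "e t \<bullet> (- aS *\<^sub>R (M *v e t)) = - (aS * (e t \<bullet> (M *v e t)))" by simp
    have a3: "V t * k = 2 * (aS * (B^2 * V t))" by (simp add: k_def algebra_simps)
    have "2 * (e t \<bullet> (- aS *\<^sub>R (M *v e t))) + V t * k \<le> 0"
      unfolding a2 a3 using a1 by linarith
    then have "(2 * (e t \<bullet> (- aS *\<^sub>R (M *v e t))) + V t * k) * exp (k * t) \<le> 0"
      by (simp add: mult_nonpos_nonneg)
    then show ?thesis by (simp add: algebra_simps)
  qed
  have Vbound: "V t \<le> V 0 * exp (- k * t)" if t: "t \<ge> 0" for t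
  proof -
    define D where "D = (\<lambda>s. 2 * (e s \<bullet> (- aS *\<^sub>R (M *v e s))) * exp (k * s) + V s * (exp (k * s) * k))"
    have "(W has_derivative (*) (D s)) (at s within {0..t})" if "0 \<le> s" "s \<le> t" for s
    proof -
      have "(W has_real_derivative D s) (at s within {0..})" unfolding D_def using dW that by simp
      then have "(W has_real_derivative D s) (at s within {0..t})"
        by (rule has_field_derivative_subset) auto
      then show ?thesis by (simp add: has_field_derivative_def)
    qed
    then obtain c where "c \<in> {0..t}" and c: "W t - W 0 = D c * (t - 0)"
      using mvt_very_simple[OF t, of W "\<lambda>s. (*) (D s)"] by blast
    have "D c * t \<le> 0" using dWneg[of c] t unfolding D_def by (intro mult_nonpos_nonneg) auto
    then have "W t \<le> W 0" using c by simp
    then have "V t * exp (k * t) \<le> V 0" by (simp add: W_def)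
    then have "V t * exp (k * t) * exp (- k * t) \<le> V 0 * exp (- k * t)" by simp
    then show ?thesis by (simp add: mult.assoc exp_add[symmetric])
  qed
  have lim0: "((\<lambda>t. V 0 * exp (- k * t)) \<longlongrightarrow> 0) at_top"
    using kpos by real_asymp
  have "(V \<longlongrightarrow> 0) at_top"
  proof (rule tendsto_sandwich[OF _ _ tendsto_const lim0])
    show "\<forall>\<^sub>F t in at_top. 0 \<le> V t" by (simp add: V_def)
    show "\<forall>\<^sub>F t in at_top. V t \<le> V 0 * exp (- k * t)"
      using eventually_ge_at_top[of 0] by eventually_elim (rule Vbound)
  qed
  then have "((\<lambda>t. sqrt (V t)) \<longlongrightarrow> 0) at_top"
    using tendsto_real_sqrt by fastforce
  then have "((\<lambda>t. norm (e t)) \<longlongrightarrow> 0) at_top"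
    by (simp add: V_def norm_eq_sqrt_inner)
  then have "(e \<longlongrightarrow> 0) at_top" by (simp add: tendsto_norm_zero_iff)
  then have "((\<lambda>t. ys + (1 / N) *\<^sub>R e t) \<longlongrightarrow> ys + (1/N) *\<^sub>R 0) at_top"
    by (intro tendsto_intros)
  moreover have "ys + (1 / N) *\<^sub>R e t = (1 / N) *\<^sub>R S t" for t
    using Npos by (simp add: e_def algebra_simps)
  ultimately show ?thesis
    by (simp add: S_def N_def ys_def M_def H_def b_def)
qed

end
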